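(* Let $\mathfrak{r}$ be a totally real subspace of $\mathfrak{g}_\alpha$ of dimension $r$, let $H$ be the connected Lie subgroup of $AN$ with Lie algebra $\mathfrak{a}\oplus\mathfrak{r}$, and let $W\in\mathfrak{g}_\alpha\ominus(\mathfrak{r}\oplus J\mathfrak{r})$, $y\in\mathbb{R}$. Then the mean curvature vector $\mathcal{H}$ and the second fundamental form $\mathrm{II}$ of the orbit $H\cdot\operatorname{Exp}(2W+yZ)(o)$ satisfy $$\lVert\mathcal{H}\rVert^2=\frac{(1+r)^2\lVert W\rVert^4+(2+r)^2y^2(1+y^2)+\lVert W\rVert^2\bigl(1+8y^2+r^2(1+2y^2)+2r(1+3y^2)\bigr)}{4(1+y^2+\lVert W\rVert^2)^2},$$ $$\lVert\mathrm{II}\rVert^2=\frac{(1+r)\lVert W\rVert^4+(4+3r)y^2(1+y^2)+\lVert W\rVert^2\bigl(1+r+4y^2(2+r)\bigr)}{4(1+y^2+\lVert W\rVert^2)^2}.$$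
   Context: $\mathbb{C}H^n$ is the complex hyperbolic space of constant holomorphic sectional curvature $-1$; $G=SU(1,n)$, $o\in\mathbb{C}H^n$ fixed with stabilizer $K$, Cartan decomposition $\mathfrak{g}=\mathfrak{k}\oplus\mathfrak{p}$, $\mathfrak{a}\subset\mathfrak{p}$ maximal abelian ($1$-dimensional), restricted roots $\pm\alpha,\pm2\alpha$ with $\alpha,2\alpha$ positive, root spaces $\mathfrak{g}_\lambda$, $\mathfrak{n}=\mathfrak{g}_\alpha\oplus\mathfrak{g}_{2\alpha}$, $AN$ the connected subgroup with Lie algebra $\mathfrak{a}\oplus\mathfrak{n}$, acting simply transitively on $\mathbb{C}H^n$. $\mathfrak{a}\oplus\mathfrak{n}$ carries an inner product and complex structure $J$ (with $J\mathfrak{g}_\alpha=\mathfrak{g}_\alpha$, $J\mathfrak{a}=\mathfrak{g}_{2\alpha}$) making $AN$ with left-invariant metric holomorphically isometric to $\mathbb{C}H^n$; $B\in\mathfrak{a}$ is a unit vector and $Z=JB$. $\operatorname{Exp}$ is the Lie exponential of $AN$; $\ominus$ is orthogonal complement. A subspace $W\subset\mathfrak{g}_\alpha$ is totally real if $JW\perp W$. Norms $\lVert\mathcal{H}\rVert^2$, $\lVert\mathrm{II}\rVert^2$ are computed with the Riemannian metric of $\mathbb{C}H^n$ (the mean curvature vector is the trace of $\mathrm{II}$). *)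

theory Defs
  imports "HOL-Analysis.Analysis"
begin

text \<open>Algebraic model of the solvable part a + n of su(1,n), with n - 1 = CARD('m).
  An element a B + U + x Z (U in g_alpha = C^(n-1)) is the triple (a, U, x).
  The inner product is the product inner product: a b + Re(U . conj V) + x y.
  Normalisation (holomorphic sectional curvature -1):
  [B,U] = U/2, [B,Z] = Z, [U,V] = <J U, V> Z, J U = i U, J B = Z.\<close>

type_synonym ('m) an = "real \<times> (complex ^ ('m::finite)) \<times> real"

definition vecB :: "('m::finite) an" where "vecB = (1, 0, 0)"
definition vecZ :: "('m::finite) an" where "vecZ = (0, 0, 1)"

definition Jga :: "complex ^ ('m::finite) \<Rightarrow> complex ^ 'm" where
  "Jga U = (\<chi> k. \<i> * U $ k)"

definition Jan :: "('m::finite) an \<Rightarrow> 'm an" where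
  "Jan X = (case X of (a, U, x) \<Rightarrow> (- x, Jga U, a))"

definition g_alpha :: "('m::finite) an set" where
  "g_alpha = {(0, U, 0) | U. True}"

definition an_bracket :: "('m::finite) an \<Rightarrow> 'm an \<Rightarrow> 'm an" where
  "an_bracket X Y = (case X of (a, U, x) \<Rightarrow> case Y of (b, V, y) \<Rightarrow>
     (0, (a / 2) *\<^sub>R V - (b / 2) *\<^sub>R U, a * y - b * x + inner (Jga U) V))"

text \<open>Levi-Civita connection of the left-invariant metric on left-invariant fields (Koszul formula).\<close>
definition nabla :: "('m::finite) an \<Rightarrow> 'm an \<Rightarrow> 'm an" where
  "nabla X Y = (THE v. \<forall>W. inner v W =
     (inner (an_bracket X Y) W - inner (an_bracket Y W) X + inner (an_bracket W X) Y) / 2)"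

text \<open>Ad(Exp V) = exp(ad V)\<close>
definition Ad_Exp :: "('m::finite) an \<Rightarrow> 'm an \<Rightarrow> 'm an" where
  "Ad_Exp V X = (\<Sum>k. (1 / fact k) *\<^sub>R ((an_bracket V ^^ k) X))"

definition totally_real :: "('m::finite) an set \<Rightarrow> bool" where
  "totally_real R \<longleftrightarrow> subspace R \<and> R \<subseteq> g_alpha \<and> (\<forall>u\<in>R. \<forall>v\<in>R. inner (Jan u) v = 0)"

definition a_plus :: "('m::finite) an set \<Rightarrow> 'm an set" where
  "a_plus R = {t *\<^sub>R vecB + u | t u. u \<in> R}"

definition normal_part :: "('m::finite) an set \<Rightarrow> 'm an \<Rightarrow> 'm an" where
  "normal_part S v = (THE w. (\<forall>s\<in>S. inner w s = 0) \<and> v - w \<in> S)"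

text \<open>Second fundamental form of the connected subgroup with Lie algebra S, at the identity.\<close>
definition sff :: "('m::finite) an set \<Rightarrow> 'm an \<Rightarrow> 'm an \<Rightarrow> 'm an" where
  "sff S X Y = normal_part S (nabla X Y)"

definition orthonormal_basis_of :: "('m::finite) an set \<Rightarrow> 'm an set \<Rightarrow> bool" where
  "orthonormal_basis_of E S \<longleftrightarrow> finite E \<and> E \<subseteq> S \<and> pairwise orthogonal E \<and>
     (\<forall>e\<in>E. norm e = 1) \<and> span E = S"

text \<open>Tangent space (left-trivialised) at g = Exp V of the orbit H g = g (g^-1 H g):
  the Lie algebra Ad(g^-1) h = Ad(Exp(-V)) h of the conjugate subgroup.\<close>
definition orbit_tangent :: "('m::finite) an set \<Rightarrow> 'm an \<Rightarrow> 'm an set" where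
  "orbit_tangent h V = Ad_Exp (- V) ` h"

definition mean_curv :: "('m::finite) an set \<Rightarrow> 'm an set \<Rightarrow> 'm an" where
  "mean_curv S E = (\<Sum>e\<in>E. sff S e e)"

definition sff_norm2 :: "('m::finite) an set \<Rightarrow> 'm an set \<Rightarrow> real" where
  "sff_norm2 S E = (\<Sum>e\<in>E. \<Sum>f\<in>E. (norm (sff S e f))\<^sup>2)"

end

theory Submission
  imports Defs
begin

lemma Jga_add: "Jga (U + V) = Jga U + Jga V"
  unfolding Jga_def by (simp add: vec_eq_iff distrib_left)
lemma Jga_scaleR: "Jga (c *\<^sub>R U) = c *\<^sub>R Jga U"
  unfolding Jga_def by (simp add: vec_eq_iff scaleR_conv_of_real)
lemma Jga_minus: "Jga (- U) = - Jga U"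
  unfolding Jga_def by (simp add: vec_eq_iff)
lemma Jga_diff: "Jga (U - V) = Jga U - Jga V"
  unfolding Jga_def by (simp add: vec_eq_iff right_diff_distrib)
lemma Jga_zero[simp]: "Jga 0 = 0"
  unfolding Jga_def by (simp add: vec_eq_iff)
lemma Jga_sum: "Jga (sum f A) = (\<Sum>a\<in>A. Jga (f a))"
  by (induction A rule: infinite_finite_induct) (auto simp: Jga_add)
lemma inner_Jga_left: "inner (Jga U) V = - inner U (Jga V)"
  unfolding Jga_def inner_vec_def by (simp add: inner_complex_def sum_negf[symmetric] algebra_simps)
lemma inner_Jga_Jga: "inner (Jga U) (Jga V) = inner U V"
  unfolding Jga_def inner_vec_def by (simp add: inner_complex_def algebra_simps)
lemma inner_Jga_self: "inner (Jga U) U = 0"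
  using inner_Jga_left[of U U] by (simp add: inner_commute)
lemma inner_self_Jga: "inner U (Jga U) = 0"
  using inner_Jga_left[of U U] by (simp add: inner_commute)

lemma inner_Jga_swap: "inner U (Jga V) = - inner V (Jga U)"
  using inner_Jga_left[of V U] by (simp add: inner_commute)

definition nab :: "('m::finite) an \<Rightarrow> 'm an \<Rightarrow> 'm an" where
  "nab X Y = (case X of (a, U, x) \<Rightarrow> case Y of (b, V, y) \<Rightarrow>
     (inner U V / 2 + x * y, - (b/2) *\<^sub>R U - (x/2) *\<^sub>R Jga V - (y/2) *\<^sub>R Jga U,
      inner (Jga U) V / 2 - b * x))"

lemma key0: "inner (nab (a,U,x) (b,V,y)) (c,P,z) =
     (inner (an_bracket (a,U,x) (b,V,y)) (c,P,z) - inner (an_bracket (b,V,y) (c,P,z)) (a,U,x) + inner (an_bracket (c,P,z) (a,U,x)) (b,V,y)) / 2"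
proof -
    have j1: "inner (Jga V) P = inner P (Jga V)" by (simp add: inner_commute)
    have j2: "inner (Jga P) U = - inner P (Jga U)" by (rule inner_Jga_left)
    have j3: "inner (Jga U) V = - inner U (Jga V)" by (rule inner_Jga_left)
    have j4: "inner (Jga U) P = inner P (Jga U)" by (simp add: inner_commute)
    have c1: "inner U P = inner P U" "inner V P = inner P V" "inner V U = inner U V" by (simp_all add: inner_commute)
    show ?thesis unfolding nab_def an_bracket_def
      apply (simp add: inner_diff_left inner_diff_right inner_add_left inner_add_right)
      apply (simp only: j1 j2 j3 j4 c1)
      apply (simp add: algebra_simps)
      done
qed

lemma nabla_eq: "nabla X Y = nab X Y"
proof -
  have key: "inner (nab X Y) Q =
     (inner (an_bracket X Y) Q - inner (an_bracket Y Q) X + inner (an_bracket Q X) Y) / 2" for Q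
    using key0[of "fst X" "fst (snd X)" "snd (snd X)" "fst Y" "fst (snd Y)" "snd (snd Y)"
       "fst Q" "fst (snd Q)" "snd (snd Q)"] by simp
  show ?thesis unfolding nabla_def
  proof (rule the_equality)
    fix v assume A: "\<forall>W. inner v W = (inner (an_bracket X Y) W - inner (an_bracket Y W) X + inner (an_bracket W X) Y) / 2"
    then have "inner (v - nab X Y) (v - nab X Y) = 0"
      using key[of "v - nab X Y"] A[rule_format, of "v - nab X Y"] by (simp add: inner_diff_left)
    then show "v = nab X Y" by simp
  qed (use key in auto)
qed

definition X0 :: "complex^'m::finite \<Rightarrow> real \<Rightarrow> 'm an" where "X0 w y = (1, w, y)"
definition NN :: "complex^'m::finite \<Rightarrow> real \<Rightarrow> real" where "NN w y = 1 + y\<^sup>2 + (norm w)\<^sup>2"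
definition PP :: "complex^'m::finite \<Rightarrow> real \<Rightarrow> 'm an" where
  "PP w y = ((norm w)\<^sup>2/2 + y\<^sup>2, - (1/2) *\<^sub>R w - y *\<^sub>R Jga w, - y)"
definition LL :: "real \<Rightarrow> complex^'m::finite \<Rightarrow> 'm an" where
  "LL y U = (0, - (y/2) *\<^sub>R Jga U, 0)"
definition BP :: "complex^'m::finite \<Rightarrow> real \<Rightarrow> 'm an" where
  "BP w y = (1 - 1 / NN w y, - (1 / NN w y) *\<^sub>R w, - y / NN w y)"
definition TT :: "'m an set \<Rightarrow> complex^'m::finite \<Rightarrow> real \<Rightarrow> 'm an set" where
  "TT R w y = {t *\<^sub>R X0 w y + u | t u. u \<in> R}"

lemma NN_pos: "NN w y > 0"
  unfolding NN_def by (simp add: add_pos_nonneg)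

lemma aux1: "(N::real) \<noteq> 0 \<Longrightarrow> (1 - 1/N)\<^sup>2 + (N - 1)/N\<^sup>2 = 1 - 1/N"
  by (simp add: field_simps power2_eq_square)

lemma vec_aux: fixes JV JU Jw w U :: "'a::real_vector" shows
 "(s*y/2) *\<^sub>R JV + (t*y/2) *\<^sub>R JU - (s*t) *\<^sub>R (-((1/2) *\<^sub>R w) - y *\<^sub>R Jw) - (t*y/2) *\<^sub>R (s *\<^sub>R Jw + JU) - (s*y/2) *\<^sub>R (t *\<^sub>R Jw + JV) - (t/2) *\<^sub>R (s *\<^sub>R w + U) = - ((t/2) *\<^sub>R U)"
  apply (simp add: algebra_simps)
  apply (simp only: scaleR_left_distrib[symmetric])
  apply simp
  done

lemma normal_part_eq:
  assumes S: "subspace S" and o: "\<forall>s\<in>S. inner n s = 0" and d: "v - n \<in> S"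
  shows "normal_part S v = n"
  unfolding normal_part_def
proof (rule the_equality)
  show "(\<forall>s\<in>S. inner n s = 0) \<and> v - n \<in> S" using o d by auto
  fix m assume m: "(\<forall>s\<in>S. inner m s = 0) \<and> v - m \<in> S"
  have "(v - n) - (v - m) \<in> S" using subspace_diff[OF S] m d by blast
  then have dm: "m - n \<in> S" by simp
  have "inner (m - n) (m - n) = 0" using m o dm by (simp add: inner_diff_left)
  then show "m = n" by simp
qed

context
  fixes R :: "('m::finite) an set" and w :: "complex^'m" and y :: real
  assumes subR: "subspace R"
    and Rform: "\<And>u. u \<in> R \<Longrightarrow> u = (0, fst (snd u), 0)"
    and wR1: "\<And>U. (0, U, 0) \<in> R \<Longrightarrow> inner w U = 0"
    and wR2: "\<And>U. (0, U, 0) \<in> R \<Longrightarrow> inner w (Jga U) = 0"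
    and TR: "\<And>U V. (0, U, 0) \<in> R \<Longrightarrow> (0, V, 0) \<in> R \<Longrightarrow> inner (Jga U) V = 0"
begin

lemma TT_span: "TT R w y = span (insert (X0 w y) R)"
proof -
  have sR: "span R = R" using subR by (simp add: span_eq_iff)
  show ?thesis unfolding span_insert sR TT_def
  proof (intro set_eqI iffI)
    fix x assume "x \<in> {t *\<^sub>R X0 w y + u |t u. u \<in> R}"
    then obtain t u where "x = t *\<^sub>R X0 w y + u" "u \<in> R" by auto
    then show "x \<in> {x. \<exists>k. x - k *\<^sub>R X0 w y \<in> R}" by (intro CollectI exI[of _ t]) simp
  next
    fix x assume "x \<in> {x. \<exists>k. x - k *\<^sub>R X0 w y \<in> R}"
    then obtain k where "x - k *\<^sub>R X0 w y \<in> R" by auto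
    then show "x \<in> {t *\<^sub>R X0 w y + u |t u. u \<in> R}"
      by (intro CollectI exI[of _ k] exI[of _ "x - k *\<^sub>R X0 w y"]) simp
  qed
qed

lemma TT_subspace: "subspace (TT R w y)"
  unfolding TT_span by (rule subspace_span)

lemma X0_notin: "X0 w y \<notin> span R"
proof
  assume "X0 w y \<in> span R"
  then have "X0 w y \<in> R" using subR by (metis span_eq_iff)
  from Rform[OF this] show False by (simp add: X0_def)
qed

lemma TT_dim: "dim (TT R w y) = dim R + 1"
  unfolding TT_span dim_span using X0_notin by (simp add: dim_insert)

lemma inner_tab:
  assumes "(0,U,0) \<in> R" "(0,V,0) \<in> R"
  shows "inner (PP w y) (X0 w y) = 0" "inner (PP w y) (0,U,0) = 0"
    "inner (LL y U) (X0 w y) = 0" "inner (LL y U) (0,V,0) = 0"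
    "inner (BP w y) (X0 w y) = 0" "inner (BP w y) (0,U,0) = 0"
    "inner (X0 w y) (0,U,0) = 0"
    "inner (PP w y) (LL y U) = 0" "inner (LL y U) (BP w y) = 0"
    "inner (PP w y) (BP w y) = (norm w)\<^sup>2/2 + y\<^sup>2"
    "inner (LL y U) (LL y V) = y\<^sup>2/4 * inner U V"
    "inner (PP w y) (PP w y) = ((norm w)\<^sup>2/2 + y\<^sup>2)\<^sup>2 + (norm w)\<^sup>2/4 + y\<^sup>2 * (norm w)\<^sup>2 + y\<^sup>2"
    "inner (BP w y) (BP w y) = 1 - 1 / NN w y"
proof -
  have nw: "inner w w = (norm w)\<^sup>2" by (simp add: power2_norm_eq_inner)
  have a1: "inner w (Jga w) = 0" "inner (Jga w) w = 0" "inner (Jga w) (Jga w) = (norm w)\<^sup>2"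
    by (simp_all add: inner_self_Jga inner_Jga_self inner_Jga_Jga nw)
  have u1: "inner w U = 0" "inner U w = 0" "inner w (Jga U) = 0" "inner (Jga U) w = 0"
    "inner (Jga w) U = 0" "inner U (Jga w) = 0" "inner (Jga w) (Jga U) = 0" "inner (Jga U) (Jga w) = 0"
    using wR1[OF assms(1)] wR2[OF assms(1)] inner_Jga_left[of w U] inner_Jga_Jga[of w U]
    by (auto simp: inner_commute)
  have v1: "inner (Jga U) V = 0" "inner V (Jga U) = 0"
    using TR[OF assms] by (auto simp: inner_commute)
  have N0: "NN w y \<noteq> 0" using NN_pos[of w y] by simp
  show "inner (PP w y) (X0 w y) = 0" "inner (PP w y) (0,U,0) = 0"
    "inner (LL y U) (X0 w y) = 0" "inner (LL y U) (0,V,0) = 0"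
    "inner (BP w y) (0,U,0) = 0"
    "inner (X0 w y) (0,U,0) = 0"
    "inner (PP w y) (LL y U) = 0" "inner (LL y U) (BP w y) = 0"
    "inner (LL y U) (LL y V) = y\<^sup>2/4 * inner U V"
    "inner (PP w y) (PP w y) = ((norm w)\<^sup>2/2 + y\<^sup>2)\<^sup>2 + (norm w)\<^sup>2/4 + y\<^sup>2 * (norm w)\<^sup>2 + y\<^sup>2"
    unfolding PP_def X0_def LL_def BP_def
    by (simp_all add: inner_diff_left inner_diff_right inner_add_left inner_add_right nw a1 u1 v1
        inner_Jga_Jga power2_eq_square algebra_simps)
  show "inner (BP w y) (X0 w y) = 0"
  proof -
    have "inner (BP w y) (X0 w y) = 1 - (1 + (norm w)\<^sup>2 + y\<^sup>2) / NN w y"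
      unfolding X0_def BP_def by (simp add: nw power2_eq_square add_divide_distrib diff_divide_distrib)
    also have "\<dots> = 0" using N0 unfolding NN_def by (simp add: algebra_simps)
    finally show ?thesis .
  qed
  show "inner (PP w y) (BP w y) = (norm w)\<^sup>2/2 + y\<^sup>2"
  proof -
    have "inner (PP w y) (BP w y) = ((norm w)\<^sup>2/2 + y\<^sup>2) * (1 - 1 / NN w y) + ((norm w)\<^sup>2/2) / NN w y + y\<^sup>2 / NN w y"
      unfolding PP_def BP_def
      by (simp add: inner_diff_left inner_diff_right inner_add_left inner_add_right nw a1 power2_eq_square)
    also have "\<dots> = (norm w)\<^sup>2/2 + y\<^sup>2" using N0 by (simp add: field_simps)
    finally show ?thesis .
  qed
  show "inner (BP w y) (BP w y) = 1 - 1 / NN w y"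
  proof -
    have "inner (BP w y) (BP w y) = (1 - 1 / NN w y)\<^sup>2 + ((norm w)\<^sup>2 + y\<^sup>2) / (NN w y)\<^sup>2"
      unfolding BP_def by (simp add: nw power2_eq_square add_divide_distrib)
    also have "\<dots> = 1 - 1 / NN w y"
    proof -
      have "(norm w)\<^sup>2 + y\<^sup>2 = NN w y - 1" unfolding NN_def by simp
      then show ?thesis using aux1[OF N0] by simp
    qed
    finally show ?thesis .
  qed
qed


lemma sff_formula:
  assumes U: "(0,U,0) \<in> R" and V: "(0,V,0) \<in> R"
  shows "sff (TT R w y) (s *\<^sub>R X0 w y + (0,U,0)) (t *\<^sub>R X0 w y + (0,V,0)) =
    (s * t) *\<^sub>R PP w y + s *\<^sub>R LL y V + t *\<^sub>R LL y U + (inner U V / 2) *\<^sub>R BP w y"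
    (is "_ = ?n")
proof -
  note tab = inner_tab[OF U V] inner_tab[OF V U]
  have nw: "inner w w = (norm w)\<^sup>2" by (simp add: power2_norm_eq_inner)
  have a1: "inner w (Jga w) = 0" "inner (Jga w) w = 0" "inner (Jga w) (Jga w) = (norm w)\<^sup>2"
    by (simp_all add: inner_self_Jga inner_Jga_self inner_Jga_Jga nw)
  have u1: "inner w U = 0" "inner U w = 0" "inner w (Jga U) = 0" "inner (Jga U) w = 0"
    "inner (Jga w) U = 0" "inner U (Jga w) = 0"
    using wR1[OF U] wR2[OF U] inner_Jga_left[of w U]
    by (auto simp: inner_commute)
  have v1: "inner w V = 0" "inner V w = 0" "inner w (Jga V) = 0" "inner (Jga V) w = 0"
    "inner (Jga w) V = 0" "inner V (Jga w) = 0"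
    using wR1[OF V] wR2[OF V] inner_Jga_left[of w V]
    by (auto simp: inner_commute)
  have uv: "inner (Jga U) V = 0" using TR[OF U V] .
  have N0: "NN w y \<noteq> 0" using NN_pos[of w y] by simp
  have orth: "\<forall>x\<in>TT R w y. inner ?n x = 0"
  proof
    fix x assume "x \<in> TT R w y"
    then obtain \<tau> q where x: "x = \<tau> *\<^sub>R X0 w y + q" and q: "q \<in> R" unfolding TT_def by auto
    have q2: "q = (0, fst (snd q), 0)" using Rform[OF q] .
    have qR: "(0, fst (snd q), 0) \<in> R" using q q2 by simp
    define Q where "Q = fst (snd q)"
    have xq: "x = \<tau> *\<^sub>R X0 w y + (0, Q, 0)" using x q2 Q_def by simp
    have QR: "(0, Q, 0) \<in> R" using qR Q_def by simp
    note tq = inner_tab[OF QR U] inner_tab[OF U QR] inner_tab[OF V QR]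
    show "inner ?n x = 0" unfolding xq
      by (simp add: inner_add_left inner_add_right tab tq)
  qed
  have eq: "nab (s *\<^sub>R X0 w y + (0,U,0)) (t *\<^sub>R X0 w y + (0,V,0)) - ?n =
      (inner U V / (2 * NN w y)) *\<^sub>R X0 w y + (- (t/2)) *\<^sub>R (0,U,0)"
    unfolding nab_def X0_def PP_def LL_def BP_def using N0
    apply (simp add: inner_add_left inner_add_right u1 v1 uv a1 nw Jga_add Jga_scaleR Jga_minus Jga_diff)
    apply (intro conjI)
     apply (simp add: field_simps power2_eq_square)
    apply (rule vec_aux)
    done
  have mem: "(inner U V / (2 * NN w y)) *\<^sub>R X0 w y + (- (t/2)) *\<^sub>R (0,U,0) \<in> TT R w y"
    unfolding TT_def using subspace_scale[OF subR U] by blast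
  show ?thesis unfolding sff_def nabla_eq
    apply (rule normal_part_eq[OF TT_subspace orth])
    unfolding eq by (rule mem)
qed

end

lemma onb_coeff:
  assumes E: "orthonormal_basis_of E S" and e: "e \<in> E"
  shows "inner (\<Sum>v\<in>E. c v *\<^sub>R v) e = c e"
proof -
  have fin: "finite E" and po: "pairwise orthogonal E" and n1: "\<forall>e\<in>E. norm e = 1"
    using E unfolding orthonormal_basis_of_def by auto
  have "inner (\<Sum>v\<in>E. c v *\<^sub>R v) e = (\<Sum>v\<in>E. c v * inner v e)"
    by (simp add: inner_sum_left)
  also have "\<dots> = c e * inner e e + (\<Sum>v\<in>E - {e}. c v * inner v e)"
    using fin e by (simp add: sum.remove)
  also have "(\<Sum>v\<in>E - {e}. c v * inner v e) = 0"
    using po e by (intro sum.neutral) (auto simp: pairwise_def orthogonal_def)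
  also have "inner e e = 1" using n1 e by (simp add: dot_square_norm)
  finally show ?thesis by simp
qed

lemma onb_expand:
  assumes E: "orthonormal_basis_of E S" and a: "a \<in> S"
  shows "(\<Sum>e\<in>E. inner a e *\<^sub>R e) = a"
proof -
  have fin: "finite E" and sp: "span E = S" using E unfolding orthonormal_basis_of_def by auto
  have "a \<in> range (\<lambda>u. \<Sum>v\<in>E. u v *\<^sub>R v)" using a sp span_finite[OF fin] by simp
  then obtain c where c: "a = (\<Sum>v\<in>E. c v *\<^sub>R v)" by auto
  have "\<And>e. e \<in> E \<Longrightarrow> inner a e = c e" using onb_coeff[OF E] c by simp
  then show ?thesis using c by simp
qed

lemma onb_parseval:
  assumes E: "orthonormal_basis_of E S" and a: "a \<in> S"
  shows "(\<Sum>e\<in>E. (inner a e)\<^sup>2) = inner a a"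
proof -
  have "inner a a = inner a (\<Sum>e\<in>E. inner a e *\<^sub>R e)" using onb_expand[OF E a] by simp
  also have "\<dots> = (\<Sum>e\<in>E. (inner a e)\<^sup>2)" by (simp add: inner_sum_right power2_eq_square)
  finally show ?thesis by simp
qed

lemma onb_card:
  assumes E: "orthonormal_basis_of E S"
  shows "card E = dim S"
proof -
  have po: "pairwise orthogonal E" and n1: "\<forall>e\<in>E. norm e = 1" and sp: "span E = S"
    using E unfolding orthonormal_basis_of_def by auto
  have "0 \<notin> E" using n1 by auto
  then have "independent E" using pairwise_orthogonal_independent[OF po] by simp
  then show ?thesis using dim_span_eq_card_independent sp by metis
qed

lemma Ad_Exp_2:
  assumes "an_bracket V (an_bracket V X) = 0"
  shows "Ad_Exp V X = X + an_bracket V X"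
proof -
  define f where "f = an_bracket V"
  have f0: "f 0 = 0" unfolding f_def an_bracket_def by (cases V) (simp add: zero_prod_def)
  have z: "(f ^^ k) 0 = 0" for k by (induction k) (simp_all add: f0)
  have ff: "f (f X) = 0" using assms f_def by simp
  have "(f ^^ Suc (Suc k)) X = 0" for k
    by (simp only: funpow_Suc_right comp_def ff z)
  then have z2: "n \<notin> {0, 1} \<Longrightarrow> (1 / fact n) *\<^sub>R (f ^^ n) X = 0" for n
    by (cases n; cases "n - 1") auto
  have "Ad_Exp V X = (\<Sum>n\<in>{0,1::nat}. (1 / fact n) *\<^sub>R (f ^^ n) X)"
    unfolding Ad_Exp_def f_def[symmetric] by (rule suminf_finite) (use z2 in auto)
  also have "\<dots> = X + f X" by simp
  finally show ?thesis unfolding f_def .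
qed

lemma LL_add: "LL y (a + b) = LL y a + LL y b" unfolding LL_def by (simp add: Jga_add algebra_simps)
lemma LL_scale: "LL y (c *\<^sub>R a) = c *\<^sub>R LL y a" unfolding LL_def by (simp add: Jga_scaleR)
lemma LL_zero: "LL y 0 = 0" unfolding LL_def by (simp add: zero_prod_def)
lemma LL_sum: "(\<Sum>e\<in>A. c e *\<^sub>R LL y (f e)) = LL y (\<Sum>e\<in>A. c e *\<^sub>R f e)"
  by (induction A rule: infinite_finite_induct) (simp_all add: LL_zero LL_add LL_scale)

lemma final1:
  fixes nw y r :: real
  assumes N: "N = 1 + y\<^sup>2 + nw\<^sup>2"
  shows "(1/N)\<^sup>2 * ((nw\<^sup>2/2 + y\<^sup>2)\<^sup>2 + nw\<^sup>2/4 + y\<^sup>2 * nw\<^sup>2 + y\<^sup>2) + 2 * (1/N) * (r/2) * (nw\<^sup>2/2 + y\<^sup>2) + (r/2)\<^sup>2 * (1 - 1/N) =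
      ((1 + r)\<^sup>2 * nw^4 + (2 + r)\<^sup>2 * y\<^sup>2 * (1 + y\<^sup>2)
       + nw\<^sup>2 * (1 + 8 * y\<^sup>2 + r\<^sup>2 * (1 + 2 * y\<^sup>2) + 2 * r * (1 + 3 * y\<^sup>2)))
      / (4 * (1 + y\<^sup>2 + nw\<^sup>2)\<^sup>2)"
proof -
  have N0: "N \<noteq> 0" using N by (smt (verit) zero_le_power2)
  show ?thesis unfolding N[symmetric] using N0
    apply (simp add: field_simps)
    apply (simp add: N power2_eq_square power4_eq_xxxx)
    apply (simp add: algebra_simps)
    done
qed
lemma final2:
  fixes nw y r :: real
  assumes N: "N = 1 + y\<^sup>2 + nw\<^sup>2"
  shows "(1/N)\<^sup>2 * ((nw\<^sup>2/2 + y\<^sup>2)\<^sup>2 + nw\<^sup>2/4 + y\<^sup>2 * nw\<^sup>2 + y\<^sup>2) + y\<^sup>2/4 * (2 * ((1/N) * r)) + (1 - 1/N)/4 * r =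
      ((1 + r) * nw^4 + (4 + 3 * r) * y\<^sup>2 * (1 + y\<^sup>2)
       + nw\<^sup>2 * (1 + r + 4 * y\<^sup>2 * (2 + r)))
      / (4 * (1 + y\<^sup>2 + nw\<^sup>2)\<^sup>2)"
proof -
  have N0: "N \<noteq> 0" using N by (smt (verit) zero_le_power2)
  show ?thesis unfolding N[symmetric] using N0
    apply (simp add: field_simps)
    apply (simp add: N power2_eq_square power4_eq_xxxx)
    apply (simp add: algebra_simps)
    done
qed

theorem lemma4p3:
  fixes R :: "('m::finite) an set" and W :: "('m::finite) an" and y :: real and r :: nat and E :: "('m::finite) an set"
  assumes "totally_real R" and "dim R = r"
    and "W \<in> g_alpha" and "\<forall>u\<in>R. inner W u = 0 \<and> inner W (Jan u) = 0"
    and "orthonormal_basis_of E (orbit_tangent (a_plus R) (2 *\<^sub>R W + y *\<^sub>R vecZ))"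
  shows "((norm (mean_curv (orbit_tangent (a_plus R) (2 *\<^sub>R W + y *\<^sub>R vecZ)) E))\<^sup>2 =
      ((1 + real r)\<^sup>2 * (norm W)^4 + (2 + real r)\<^sup>2 * y\<^sup>2 * (1 + y\<^sup>2)
       + (norm W)\<^sup>2 * (1 + 8 * y\<^sup>2 + (real r)\<^sup>2 * (1 + 2 * y\<^sup>2) + 2 * real r * (1 + 3 * y\<^sup>2)))
      / (4 * (1 + y\<^sup>2 + (norm W)\<^sup>2)\<^sup>2)) \<and>
     (sff_norm2 (orbit_tangent (a_plus R) (2 *\<^sub>R W + y *\<^sub>R vecZ)) E =
      ((1 + real r) * (norm W)^4 + (4 + 3 * real r) * y\<^sup>2 * (1 + y\<^sup>2)
       + (norm W)\<^sup>2 * (1 + real r + 4 * y\<^sup>2 * (2 + real r)))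
      / (4 * (1 + y\<^sup>2 + (norm W)\<^sup>2)\<^sup>2))"
proof -
  from assms(1) have subR: "subspace R" and Rga: "R \<subseteq> g_alpha"
    and trR: "\<forall>u\<in>R. \<forall>v\<in>R. inner (Jan u) v = 0"
    unfolding totally_real_def by auto
  obtain w where W: "W = (0, w, 0)" using assms(3) unfolding g_alpha_def by auto
  have Rform: "u = (0, fst (snd u), 0)" if "u \<in> R" for u
    using Rga that unfolding g_alpha_def by auto
  have wR1: "inner w U = 0" if "(0,U,0) \<in> R" for U
    using assms(4) that W by auto
  have wR2: "inner w (Jga U) = 0" if "(0,U,0) \<in> R" for U
    using assms(4) that W by (auto simp: Jan_def)
  have TR: "inner (Jga U) V = 0" if "(0,U,0) \<in> R" "(0,V,0) \<in> R" for U V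
    using trR[rule_format, OF that] by (simp add: Jan_def)
  note ctx = subR Rform wR1 wR2 TR

  have tang: "orbit_tangent (a_plus R) (2 *\<^sub>R W + y *\<^sub>R vecZ) = TT R w y"
  proof -
    have Ad: "Ad_Exp (- (2 *\<^sub>R W + y *\<^sub>R vecZ)) (t *\<^sub>R vecB + u) = t *\<^sub>R X0 w y + u"
      if u: "u \<in> R" for t u
    proof -
      obtain U where uU: "u = (0,U,0)" using Rform[OF u] by blast
      have U: "(0,U,0) \<in> R" using u uU by simp
      have i1: "inner (Jga w) U = 0" using wR2[OF U] inner_Jga_left[of w U] by simp
      have i2: "inner (Jga w) w = 0" by (rule inner_Jga_self)
      have b1: "an_bracket (- (2 *\<^sub>R W + y *\<^sub>R vecZ)) (t *\<^sub>R vecB + u) = (0, t *\<^sub>R w, t * y)"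
        unfolding uU W vecZ_def vecB_def an_bracket_def by (simp add: Jga_minus Jga_scaleR i1)
      have b2: "an_bracket (- (2 *\<^sub>R W + y *\<^sub>R vecZ)) (0, t *\<^sub>R w, t * y) = 0"
        unfolding W vecZ_def an_bracket_def by (simp add: Jga_minus Jga_scaleR i2 zero_prod_def)
      show ?thesis using Ad_Exp_2[of "- (2 *\<^sub>R W + y *\<^sub>R vecZ)" "t *\<^sub>R vecB + u"] b1 b2
        unfolding uU X0_def vecB_def by simp
    qed
    show ?thesis unfolding orbit_tangent_def a_plus_def TT_def
    proof (intro set_eqI iffI)
      fix x assume "x \<in> Ad_Exp (- (2 *\<^sub>R W + y *\<^sub>R vecZ)) ` {t *\<^sub>R vecB + u |t u. u \<in> R}"
      then obtain t u where tu: "u \<in> R" "x = Ad_Exp (- (2 *\<^sub>R W + y *\<^sub>R vecZ)) (t *\<^sub>R vecB + u)" by auto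
      then have "x = t *\<^sub>R X0 w y + u" using Ad[OF tu(1)] by simp
      then show "x \<in> {t *\<^sub>R X0 w y + u |t u. u \<in> R}" using tu(1) by blast
    next
      fix x assume "x \<in> {t *\<^sub>R X0 w y + u |t u. u \<in> R}"
      then obtain t u where tu: "u \<in> R" "x = t *\<^sub>R X0 w y + u" by auto
      then have "x = Ad_Exp (- (2 *\<^sub>R W + y *\<^sub>R vecZ)) (t *\<^sub>R vecB + u)" using Ad by simp
      then show "x \<in> Ad_Exp (- (2 *\<^sub>R W + y *\<^sub>R vecZ)) ` {t *\<^sub>R vecB + u |t u. u \<in> R}"
        using tu(1) by blast
    qed
  qed
  define T where "T = TT R w y"
  define N where "N = NN w y"
  have N0: "N \<noteq> 0" using NN_pos[of w y] N_def by simp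
  have E: "orthonormal_basis_of E T" using assms(5) tang T_def by simp
  have finE: "finite E" and ET: "E \<subseteq> T" and n1: "\<forall>e\<in>E. norm e = 1"
    using E unfolding orthonormal_basis_of_def by auto
  have cardE: "card E = r + 1"
    using onb_card[OF E] TT_dim[OF ctx] assms(2) T_def by simp
  define te where "te e = fst e" for e :: "'m an"
  define Ue where "Ue e = fst (snd e) - fst e *\<^sub>R w" for e :: "'m an"
  have dec: "e = te e *\<^sub>R X0 w y + (0, Ue e, 0) \<and> (0, Ue e, 0) \<in> R" if eT: "e \<in> T" for e
  proof -
    obtain t q where e: "e = t *\<^sub>R X0 w y + q" and q: "q \<in> R"
      using eT unfolding T_def TT_def by auto
    obtain Q where qQ: "q = (0, Q, 0)" using Rform[OF q] by blast
    have e2: "e = (t, t *\<^sub>R w + Q, t * y)" unfolding e qQ X0_def by simp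
    have "te e = t" "Ue e = Q" unfolding te_def Ue_def e2 by simp_all
    then show ?thesis using e q qQ by simp
  qed
  have RT: "u \<in> T" if "u \<in> R" for u
    unfolding T_def TT_def using that by (intro CollectI exI[of _ 0] exI[of _ u]) simp
  have X0T: "X0 w y \<in> T"
    unfolding T_def TT_def using subspace_0[OF subR] by (intro CollectI exI[of _ 1] exI[of _ 0]) simp
  have nw: "inner w w = (norm w)\<^sup>2" by (simp add: power2_norm_eq_inner)
  have nX0: "inner (X0 w y) (X0 w y) = N" unfolding X0_def N_def NN_def
    by (simp add: nw power2_eq_square)
  have i0: "inner (X0 w y) (0, U, 0) = 0" "inner (0, U, 0) (X0 w y) = 0" if "(0,U,0) \<in> R" for U
    using inner_tab(7)[OF ctx that that] by (simp_all add: inner_commute)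
  have ie: "inner (X0 w y) e = N * te e" if "e \<in> T" for e
  proof -
    have d: "e = te e *\<^sub>R X0 w y + (0, Ue e, 0)" "(0, Ue e, 0) \<in> R" using dec[OF that] by auto
    show ?thesis by (subst d(1)) (simp add: inner_add_right nX0 i0[OF d(2)])
  qed
  have S1: "(\<Sum>e\<in>E. (te e)\<^sup>2) = 1 / N"
  proof -
    have "(\<Sum>e\<in>E. (inner (X0 w y) e)\<^sup>2) = N" using onb_parseval[OF E X0T] nX0 by simp
    moreover have "(\<Sum>e\<in>E. (inner (X0 w y) e)\<^sup>2) = (\<Sum>e\<in>E. N\<^sup>2 * (te e)\<^sup>2)"
      by (rule sum.cong) (use ie ET in \<open>auto simp: power_mult_distrib\<close>)
    then have "(\<Sum>e\<in>E. (inner (X0 w y) e)\<^sup>2) = N\<^sup>2 * (\<Sum>e\<in>E. (te e)\<^sup>2)"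
      by (simp add: sum_distrib_left)
    ultimately show ?thesis using N0 by (simp add: field_simps power2_eq_square)
  qed
  have Sexp: "(\<Sum>e\<in>E. te e *\<^sub>R e) = (1 / N) *\<^sub>R X0 w y"
  proof -
    have "X0 w y = (\<Sum>e\<in>E. inner (X0 w y) e *\<^sub>R e)" using onb_expand[OF E X0T] by simp
    also have "\<dots> = (\<Sum>e\<in>E. N *\<^sub>R (te e *\<^sub>R e))"
      by (rule sum.cong) (use ie ET in auto)
    also have "\<dots> = N *\<^sub>R (\<Sum>e\<in>E. te e *\<^sub>R e)"
      by (simp add: scaleR_sum_right)
    finally show ?thesis using N0 by simp
  qed
  have S2v: "(\<Sum>e\<in>E. te e *\<^sub>R (0::real, Ue e, 0::real)) = 0"
  proof -
    have "(\<Sum>e\<in>E. te e *\<^sub>R (0, Ue e, 0)) = (\<Sum>e\<in>E. te e *\<^sub>R e - (te e)\<^sup>2 *\<^sub>R X0 w y)"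
    proof (rule sum.cong)
      fix e assume eE: "e \<in> E"
      have d: "e = te e *\<^sub>R X0 w y + (0, Ue e, 0)" using dec[of e] ET eE by blast
      show "te e *\<^sub>R (0, Ue e, 0) = te e *\<^sub>R e - (te e)\<^sup>2 *\<^sub>R X0 w y"
        by (subst (2) d) (simp add: scaleR_right_distrib power2_eq_square)
    qed simp
    also have "\<dots> = 0"
      by (simp add: sum_subtractf Sexp scaleR_sum_left[symmetric] S1)
    finally show ?thesis .
  qed
  have S2: "(\<Sum>e\<in>E. te e *\<^sub>R Ue e) = 0"
    using arg_cong[OF S2v, of "\<lambda>x. fst (snd x)"] by (simp add: fst_sum snd_sum)
  have dE: "e = te e *\<^sub>R X0 w y + (0, Ue e, 0)" "(0, Ue e, 0) \<in> R" if "e \<in> E" for e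
    using dec[of e] ET that by blast+
  have nU: "inner (Ue e) (Ue e) = 1 - N * (te e)\<^sup>2" if eE: "e \<in> E" for e
  proof -
    have "inner e e = 1" using n1 eE by (simp add: dot_square_norm)
    moreover have "inner e e = N * (te e)\<^sup>2 + inner (Ue e) (Ue e)"
      by (subst (1 2) dE(1)[OF eE]) (simp add: inner_add_left inner_add_right nX0 i0[OF dE(2)[OF eE]] power2_eq_square)
    ultimately show ?thesis by simp
  qed
  have S3: "(\<Sum>e\<in>E. inner (Ue e) (Ue e)) = real r"
  proof -
    have "(\<Sum>e\<in>E. inner (Ue e) (Ue e)) = (\<Sum>e\<in>E. 1 - N * (te e)\<^sup>2)"
      by (rule sum.cong) (simp_all add: nU)
    also have "\<dots> = real (card E) - N * (1 / N)"
      by (simp add: sum_subtractf sum_distrib_left[symmetric] S1)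
    finally show ?thesis using cardE N0 by simp
  qed
  have G: "inner (Ue e) (Ue f) = inner (0, Ue e, 0) f" if "e \<in> E" "f \<in> E" for e f
    by (subst (2) dE(1)[OF that(2)]) (simp add: inner_add_right i0[OF dE(2)[OF that(1)]])
  have S4: "(\<Sum>e\<in>E. \<Sum>f\<in>E. (inner (Ue e) (Ue f))\<^sup>2) = real r"
  proof -
    have "(\<Sum>e\<in>E. \<Sum>f\<in>E. (inner (Ue e) (Ue f))\<^sup>2) = (\<Sum>e\<in>E. inner (Ue e) (Ue e))"
    proof (rule sum.cong)
      fix e assume eE: "e \<in> E"
      have "(\<Sum>f\<in>E. (inner (Ue e) (Ue f))\<^sup>2) = (\<Sum>f\<in>E. (inner (0, Ue e, 0) f)\<^sup>2)"
        by (rule sum.cong) (simp_all add: G eE)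
      also have "\<dots> = inner (0::real, Ue e, 0::real) (0, Ue e, 0)"
        by (rule onb_parseval[OF E RT[OF dE(2)[OF eE]]])
      finally show "(\<Sum>f\<in>E. (inner (Ue e) (Ue f))\<^sup>2) = inner (Ue e) (Ue e)" by simp
    qed simp
    then show ?thesis using S3 by simp
  qed
  have sffE: "sff T e f = (te e * te f) *\<^sub>R PP w y + te e *\<^sub>R LL y (Ue f) + te f *\<^sub>R LL y (Ue e)
      + (inner (Ue e) (Ue f) / 2) *\<^sub>R BP w y" (is "_ = ?rhs") if "e \<in> E" "f \<in> E" for e f
  proof -
    have "sff T e f = sff T (te e *\<^sub>R X0 w y + (0, Ue e, 0)) (te f *\<^sub>R X0 w y + (0, Ue f, 0))"
      using arg_cong2[of e _ f _ "sff T", OF dE(1)[OF that(1)] dE(1)[OF that(2)]] .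
    also have "\<dots> = ?rhs"
      unfolding T_def by (rule sff_formula[OF ctx dE(2)[OF that(1)] dE(2)[OF that(2)]])
    finally show ?thesis .
  qed
  have h0: "(0, 0, 0) \<in> R" using subspace_0[OF subR] by (simp add: zero_prod_def)
  note tab0 = inner_tab[OF ctx h0 h0]
  define p1 where "p1 = (norm w)\<^sup>2/2 + y\<^sup>2"
  define KP where "KP = inner (PP w y) (PP w y)"
  define KB where "KB = inner (BP w y) (BP w y)"
  have KPv: "KP = ((norm w)\<^sup>2/2 + y\<^sup>2)\<^sup>2 + (norm w)\<^sup>2/4 + y\<^sup>2 * (norm w)\<^sup>2 + y\<^sup>2"
    unfolding KP_def using tab0(12) .
  have KBv: "KB = 1 - 1 / N" unfolding KB_def N_def using tab0(13) .
  have PB: "inner (PP w y) (BP w y) = p1" "inner (BP w y) (PP w y) = p1"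
    using tab0(10) unfolding p1_def by (simp_all add: inner_commute)
  have Nv: "N = 1 + y\<^sup>2 + (norm w)\<^sup>2" unfolding N_def NN_def ..
  have nWw: "norm W = norm w"
  proof -
    have "(norm W)\<^sup>2 = (norm w)\<^sup>2" by (simp add: W power2_norm_eq_inner)
    then show ?thesis by simp
  qed
  have S1': "(\<Sum>e\<in>E. te e * te e) = 1 / N" using S1 by (simp add: power2_eq_square)
  have mean: "mean_curv T E = (1/N) *\<^sub>R PP w y + (real r / 2) *\<^sub>R BP w y"
  proof -
    have "mean_curv T E = (\<Sum>e\<in>E. (te e * te e) *\<^sub>R PP w y + te e *\<^sub>R LL y (Ue e) + te e *\<^sub>R LL y (Ue e)
      + (inner (Ue e) (Ue e) / 2) *\<^sub>R BP w y)"
      unfolding mean_curv_def by (rule sum.cong) (simp_all add: sffE)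
    also have "\<dots> = (\<Sum>e\<in>E. te e * te e) *\<^sub>R PP w y + (\<Sum>e\<in>E. te e *\<^sub>R LL y (Ue e))
       + (\<Sum>e\<in>E. te e *\<^sub>R LL y (Ue e)) + ((\<Sum>e\<in>E. inner (Ue e) (Ue e)) / 2) *\<^sub>R BP w y"
      by (simp add: sum.distrib scaleR_sum_left sum_divide_distrib)
    also have "\<dots> = (1/N) *\<^sub>R PP w y + (real r / 2) *\<^sub>R BP w y"
      by (simp add: LL_sum S2 LL_zero S1' S3)
    finally show ?thesis .
  qed
  have part1: "(norm (mean_curv T E))\<^sup>2 = (1/N)\<^sup>2 * KP + 2 * (1/N) * (real r/2) * p1 + (real r/2)\<^sup>2 * KB"
    unfolding mean power2_norm_eq_inner
    by (simp add: inner_add_left inner_add_right PB KP_def[symmetric] KB_def[symmetric] power2_eq_square algebra_simps)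
  have nsq: "(norm (sff T e f))\<^sup>2 = KP * ((te e)\<^sup>2 * (te f)\<^sup>2)
      + (y\<^sup>2/4) * ((te e)\<^sup>2 * inner (Ue f) (Ue f)) + (y\<^sup>2/4) * (inner (Ue e) (Ue e) * (te f)\<^sup>2)
      + (KB/4) * (inner (Ue e) (Ue f))\<^sup>2 + p1 * (te e * (te f * inner (Ue e) (Ue f)))
      + (y\<^sup>2/2) * (te e * (te f * inner (Ue e) (Ue f)))" if eE: "e \<in> E" and fE: "f \<in> E" for e f
  proof -
    note te1 = inner_tab[OF ctx dE(2)[OF eE] dE(2)[OF fE]]
    note te2 = inner_tab[OF ctx dE(2)[OF fE] dE(2)[OF eE]]
    note te3 = inner_tab[OF ctx dE(2)[OF eE] dE(2)[OF eE]]
    note te4 = inner_tab[OF ctx dE(2)[OF fE] dE(2)[OF fE]]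
    have sym: "inner (LL y U) (PP w y) = inner (PP w y) (LL y U)" "inner (BP w y) (LL y U) = inner (LL y U) (BP w y)" for U
      by (simp_all add: inner_commute)
    have cUV: "inner (Ue f) (Ue e) = inner (Ue e) (Ue f)" by (simp add: inner_commute)
    show ?thesis unfolding sffE[OF eE fE] power2_norm_eq_inner
      apply (simp add: inner_add_left inner_add_right sym te1(8,9,11) te2(8,9,11) te3(11) te4(11)
          PB KP_def[symmetric] KB_def[symmetric] cUV)
      apply (simp add: power2_eq_square algebra_simps)
      apply (simp add: field_simps)
      done
  qed
  have D1: "(\<Sum>e\<in>E. \<Sum>f\<in>E. (te e)\<^sup>2 * (te f)\<^sup>2) = (1/N) * (1/N)"
    by (simp add: sum_product[symmetric] S1)
  have D2: "(\<Sum>e\<in>E. \<Sum>f\<in>E. (te e)\<^sup>2 * inner (Ue f) (Ue f)) = (1/N) * real r"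
    by (simp add: sum_product[symmetric] S1 S3)
  have D3: "(\<Sum>e\<in>E. \<Sum>f\<in>E. inner (Ue e) (Ue e) * (te f)\<^sup>2) = real r * (1/N)"
    by (simp add: sum_product[symmetric] S1 S3)
  have D4: "(\<Sum>e\<in>E. \<Sum>f\<in>E. te e * (te f * inner (Ue e) (Ue f))) = 0"
  proof -
    have "(\<Sum>f\<in>E. te e * (te f * inner (Ue e) (Ue f))) = te e * inner (Ue e) (\<Sum>f\<in>E. te f *\<^sub>R Ue f)" for e
      by (simp add: inner_sum_right sum_distrib_left)
    then show ?thesis by (simp add: S2)
  qed
  have part2: "sff_norm2 T E = KP * ((1/N) * (1/N)) + (y\<^sup>2/4) * ((1/N) * real r) + (y\<^sup>2/4) * (real r * (1/N))
      + (KB/4) * real r"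
  proof -
    have "sff_norm2 T E = (\<Sum>e\<in>E. \<Sum>f\<in>E. KP * ((te e)\<^sup>2 * (te f)\<^sup>2)
      + (y\<^sup>2/4) * ((te e)\<^sup>2 * inner (Ue f) (Ue f)) + (y\<^sup>2/4) * (inner (Ue e) (Ue e) * (te f)\<^sup>2)
      + (KB/4) * (inner (Ue e) (Ue f))\<^sup>2 + p1 * (te e * (te f * inner (Ue e) (Ue f)))
      + (y\<^sup>2/2) * (te e * (te f * inner (Ue e) (Ue f))))"
      unfolding sff_norm2_def by (intro sum.cong refl) (simp add: nsq)
    also have "\<dots> = KP * (\<Sum>e\<in>E. \<Sum>f\<in>E. (te e)\<^sup>2 * (te f)\<^sup>2)
      + (y\<^sup>2/4) * (\<Sum>e\<in>E. \<Sum>f\<in>E. (te e)\<^sup>2 * inner (Ue f) (Ue f))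
      + (y\<^sup>2/4) * (\<Sum>e\<in>E. \<Sum>f\<in>E. inner (Ue e) (Ue e) * (te f)\<^sup>2)
      + (KB/4) * (\<Sum>e\<in>E. \<Sum>f\<in>E. (inner (Ue e) (Ue f))\<^sup>2)
      + p1 * (\<Sum>e\<in>E. \<Sum>f\<in>E. te e * (te f * inner (Ue e) (Ue f)))
      + (y\<^sup>2/2) * (\<Sum>e\<in>E. \<Sum>f\<in>E. te e * (te f * inner (Ue e) (Ue f)))"
      by (simp add: sum.distrib sum_distrib_left)
    also have "\<dots> = KP * ((1/N) * (1/N)) + (y\<^sup>2/4) * ((1/N) * real r) + (y\<^sup>2/4) * (real r * (1/N))
      + (KB/4) * real r"
      unfolding D1 D2 D3 D4 S4 by simp
    finally show ?thesis .
  qed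
  have fin1: "(norm (mean_curv T E))\<^sup>2 =
      ((1 + real r)\<^sup>2 * (norm W)^4 + (2 + real r)\<^sup>2 * y\<^sup>2 * (1 + y\<^sup>2)
       + (norm W)\<^sup>2 * (1 + 8 * y\<^sup>2 + (real r)\<^sup>2 * (1 + 2 * y\<^sup>2) + 2 * real r * (1 + 3 * y\<^sup>2)))
      / (4 * (1 + y\<^sup>2 + (norm W)\<^sup>2)\<^sup>2)"
    unfolding part1 KPv KBv p1_def nWw by (rule final1[OF Nv])
  have fin2: "sff_norm2 T E =
      ((1 + real r) * (norm W)^4 + (4 + 3 * real r) * y\<^sup>2 * (1 + y\<^sup>2)
       + (norm W)\<^sup>2 * (1 + real r + 4 * y\<^sup>2 * (2 + real r)))
      / (4 * (1 + y\<^sup>2 + (norm W)\<^sup>2)\<^sup>2)" (is "_ = ?R")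
  proof -
    have "sff_norm2 T E = (1/N)\<^sup>2 * (((norm w)\<^sup>2/2 + y\<^sup>2)\<^sup>2 + (norm w)\<^sup>2/4 + y\<^sup>2 * (norm w)\<^sup>2 + y\<^sup>2)
        + y\<^sup>2/4 * (2 * ((1/N) * real r)) + (1 - 1/N)/4 * real r"
      unfolding part2 KPv KBv by (simp add: power2_eq_square algebra_simps)
    also have "\<dots> = ?R" unfolding nWw by (rule final2[OF Nv])
    finally show ?thesis .
  qed
  show ?thesis using fin1 fin2 tang T_def by simp
qed

end
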